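(* In the affine setting described in the context, let $\sigma\in(0,1]$ and let $f,\alpha,s:I^q\to\mathbb{R}$ be Hölder continuous with exponent $\sigma$, with $s=f$ at the vertices of $I^q$. Let $a=\min\{|a_{k,i}|:1\le k\le q,\ 1\le i\le M_k\}$ and suppose $\max\{\|\alpha\|_\infty/a^\sigma,\ \|\alpha\|_\infty+[\alpha]_\sigma\}<1$. Let $g^{\alpha^g}:I\to\mathbb{R}$, $g^{\alpha^g}(x)=f^\alpha(x,0,\dots,0)$. Then $g^{\alpha^g}$ is Hölder continuous with exponent $\sigma$, and $$1\le\dim_H\mathcal{G}(g^{\alpha^g})\le\underline{\dim}_B\mathcal{G}(g^{\alpha^g})\le\overline{\dim}_B\mathcal{G}(g^{\alpha^g})\le2-\sigma.$$
   Context: Affine setting: $I=[0,1]$; for each $k\in\{1,\dots,q\}$, $M_k\ge2$ and $0=x_{k,0}<\dots<x_{k,M_k}=1$, $I_{k,i}=[x_{k,i-1},x_{k,i}]$. For $1\le i\le M_k$, $u_{k,i}:I\to I_{k,i}$ is affine, $u_{k,i}(x)=a_{k,i}x+b_{k,i}$, with $a_{k,i}=x_{k,i}-x_{k,i-1}$, $b_{k,i}=x_{k,i-1}$ if $i$ is odd and $a_{k,i}=x_{k,i-1}-x_{k,i}$, $b_{k,i}=x_{k,i}$ if $i$ is even. For $i=(i_1,\dots,i_q)$, $u_i(y)=(u_{1,i_1}(y_1),\dots,u_{q,i_q}(y_q))$. Given $f,\alpha,s\in\mathcal{C}(I^q)$ with $\|\alpha\|_\infty<1$ and $s=f$ at the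 vertices of $I^q$, the $\alpha$-fractal function $f^\alpha$ is the unique continuous $f^\alpha:I^q\to\mathbb{R}$ with $f^\alpha(x)=f(x)+\alpha(x)[f^\alpha(u_i^{-1}(x))-s(u_i^{-1}(x))]$ for all $i\in\prod_k\{1,\dots,M_k\}$ and $x\in\prod_k I_{k,i_k}$. Hölder: $|h(x)-h(y)|\le K\|x-y\|_2^\sigma$; $[h]_\sigma=\sup_{x\ne y}|h(x)-h(y)|/\|x-y\|_2^\sigma$. $\mathcal{G}(h)$ is the graph of $h$; $\dim_H,\underline{\dim}_B,\overline{\dim}_B$ are Hausdorff, lower box, upper box dimension. *)

theory Defs
  imports "HOL-Analysis.Analysis"
begin

definition holder_on :: "real \<Rightarrow> 'a::metric_space set \<Rightarrow> ('a \<Rightarrow> real) \<Rightarrow> bool" where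
  "holder_on \<sigma> S h \<longleftrightarrow> (\<exists>K. \<forall>x\<in>S. \<forall>y\<in>S. \<bar>h x - h y\<bar> \<le> K * dist x y powr \<sigma>)"

definition holder_seminorm :: "real \<Rightarrow> 'a::metric_space set \<Rightarrow> ('a \<Rightarrow> real) \<Rightarrow> real" where
  "holder_seminorm \<sigma> S h = (SUP p\<in>{(x,y). x \<in> S \<and> y \<in> S \<and> x \<noteq> y}.
      \<bar>h (fst p) - h (snd p)\<bar> / dist (fst p) (snd p) powr \<sigma>)"

definition sup_norm_on :: "'a set \<Rightarrow> ('a \<Rightarrow> real) \<Rightarrow> real" where
  "sup_norm_on S h = (SUP x\<in>S. \<bar>h x\<bar>)"

text \<open>Points of I^q are vectors in real^'q (Euclidean norm). For coordinate k,
  xp k 0 < ... < xp k (M k) is the partition.\<close>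

definition aff_a :: "('q \<Rightarrow> nat \<Rightarrow> real) \<Rightarrow> 'q \<Rightarrow> nat \<Rightarrow> real" where
  "aff_a xp k i = (if odd i then xp k i - xp k (i - 1) else xp k (i - 1) - xp k i)"

definition aff_b :: "('q \<Rightarrow> nat \<Rightarrow> real) \<Rightarrow> 'q \<Rightarrow> nat \<Rightarrow> real" where
  "aff_b xp k i = (if odd i then xp k (i - 1) else xp k i)"

definition u_map :: "('q::finite \<Rightarrow> nat \<Rightarrow> real) \<Rightarrow> ('q \<Rightarrow> nat) \<Rightarrow> real^'q \<Rightarrow> real^'q" where
  "u_map xp i y = (\<chi> k. aff_a xp k (i k) * y $ k + aff_b xp k (i k))"

definition u_inv :: "('q::finite \<Rightarrow> nat \<Rightarrow> real) \<Rightarrow> ('q \<Rightarrow> nat) \<Rightarrow> real^'q \<Rightarrow> real^'q" where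
  "u_inv xp i x = (\<chi> k. (x $ k - aff_b xp k (i k)) / aff_a xp k (i k))"

definition valid_partition :: "('q::finite \<Rightarrow> nat) \<Rightarrow> ('q \<Rightarrow> nat \<Rightarrow> real) \<Rightarrow> bool" where
  "valid_partition M xp \<longleftrightarrow> (\<forall>k. 2 \<le> M k \<and> xp k 0 = 0 \<and> xp k (M k) = 1 \<and>
      (\<forall>i. 1 \<le> i \<and> i \<le> M k \<longrightarrow> xp k (i - 1) < xp k i))"

definition unit_cube :: "(real^'q::finite) set" where
  "unit_cube = cbox 0 One"

definition cube_vertices :: "(real^'q::finite) set" where
  "cube_vertices = {y. \<forall>k. y $ k = 0 \<or> y $ k = 1}"

definition a_min :: "('q::finite \<Rightarrow> nat) \<Rightarrow> ('q \<Rightarrow> nat \<Rightarrow> real) \<Rightarrow> real" where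
  "a_min M xp = Min {\<bar>aff_a xp k i\<bar> | k i. 1 \<le> i \<and> i \<le> M k}"

definition is_alpha_fractal ::
  "('q::finite \<Rightarrow> nat) \<Rightarrow> ('q \<Rightarrow> nat \<Rightarrow> real) \<Rightarrow> (real^'q \<Rightarrow> real) \<Rightarrow> (real^'q \<Rightarrow> real)
     \<Rightarrow> (real^'q \<Rightarrow> real) \<Rightarrow> (real^'q \<Rightarrow> real) \<Rightarrow> bool" where
  "is_alpha_fractal M xp f \<alpha> s F \<longleftrightarrow> continuous_on unit_cube F \<and>
     (\<forall>i. (\<forall>k. 1 \<le> i k \<and> i k \<le> M k) \<longrightarrow>
        (\<forall>x. (\<forall>k. xp k (i k - 1) \<le> x $ k \<and> x $ k \<le> xp k (i k)) \<longrightarrow>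
           F x = f x + \<alpha> x * (F (u_inv xp i x) - s (u_inv xp i x))))"

definition hausdorff_content :: "real \<Rightarrow> real \<Rightarrow> 'a::metric_space set \<Rightarrow> ennreal" where
  "hausdorff_content s \<delta> E = (INF C\<in>{C :: nat \<Rightarrow> 'a set. E \<subseteq> (\<Union>j. C j) \<and>
        (\<forall>j. bounded (C j) \<and> diameter (C j) \<le> \<delta>)}.
      (\<Sum>j. ennreal (diameter (C j) powr s)))"

definition hausdorff_measure :: "real \<Rightarrow> 'a::metric_space set \<Rightarrow> ennreal" where
  "hausdorff_measure s E = (SUP \<delta>\<in>{0<..}. hausdorff_content s \<delta> E)"

definition hausdorff_dim :: "'a::metric_space set \<Rightarrow> ereal" where
  "hausdorff_dim E = Inf {ereal s | s. 0 < s \<and> hausdorff_measure s E = 0}"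

definition box_count :: "real \<Rightarrow> 'a::metric_space set \<Rightarrow> nat" where
  "box_count \<delta> E = (LEAST n. \<exists>C :: nat \<Rightarrow> 'a set. E \<subseteq> (\<Union>j<n. C j) \<and>
        (\<forall>j<n. bounded (C j) \<and> diameter (C j) \<le> \<delta>))"

definition lower_box_dim :: "'a::metric_space set \<Rightarrow> ereal" where
  "lower_box_dim E = Liminf (at_right 0) (\<lambda>\<delta>. ereal (ln (real (box_count \<delta> E)) / - ln \<delta>))"

definition upper_box_dim :: "'a::metric_space set \<Rightarrow> ereal" where
  "upper_box_dim E = Limsup (at_right 0) (\<lambda>\<delta>. ereal (ln (real (box_count \<delta> E)) / - ln \<delta>))"

definition graph_of :: "real set \<Rightarrow> (real \<Rightarrow> real) \<Rightarrow> (real \<times> real) set" where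
  "graph_of S h = {(x, h x) | x. x \<in> S}"

end

theory Submission
  imports Defs
begin

lemma box_count_le_card:
  fixes E :: "'a::metric_space set"
  assumes "finite \<A>" "E \<subseteq> \<Union>\<A>" "\<And>A. A \<in> \<A> \<Longrightarrow> bounded A \<and> diameter A \<le> \<delta>"
  shows "box_count \<delta> E \<le> card \<A>"
    "\<exists>C :: nat \<Rightarrow> 'a set. E \<subseteq> (\<Union>j<box_count \<delta> E. C j) \<and>
        (\<forall>j<box_count \<delta> E. bounded (C j) \<and> diameter (C j) \<le> \<delta>)"
proof -
  obtain h where h: "bij_betw h {0..<card \<A>} \<A>" using ex_bij_betw_nat_finite[OF assms(1)] by blast
  have ex: "\<exists>C :: nat \<Rightarrow> 'a set. E \<subseteq> (\<Union>j<card \<A>. C j) \<and>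
        (\<forall>j<card \<A>. bounded (C j) \<and> diameter (C j) \<le> \<delta>)"
  proof (intro exI[of _ h] conjI)
    have "h ` {..<card \<A>} = \<A>" using h by (auto simp: bij_betw_def lessThan_atLeast0)
    then show "E \<subseteq> (\<Union>j<card \<A>. h j)" using assms(2) by auto
    have hin: "h j \<in> \<A>" if "j < card \<A>" for j
      using h that unfolding bij_betw_def by (metis atLeastLessThan_iff imageI zero_le)
    show "\<forall>j<card \<A>. bounded (h j) \<and> diameter (h j) \<le> \<delta>"
      using hin assms(3) by blast
  qed
  then show "box_count \<delta> E \<le> card \<A>" unfolding box_count_def by (rule Least_le)
  show "\<exists>C :: nat \<Rightarrow> 'a set. E \<subseteq> (\<Union>j<box_count \<delta> E. C j) \<and>
        (\<forall>j<box_count \<delta> E. bounded (C j) \<and> diameter (C j) \<le> \<delta>)"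
    unfolding box_count_def by (rule LeastI_ex) (use ex in blast)
qed

lemma floor_mult_bounds:
  fixes w t :: real assumes w0: "0 < w"
  shows "real_of_int \<lfloor>t/w\<rfloor> * w \<le> t \<and> t \<le> real_of_int (\<lfloor>t/w\<rfloor>+1) * w"
proof -
  have 1: "real_of_int \<lfloor>t/w\<rfloor> \<le> t/w" "t/w \<le> real_of_int \<lfloor>t/w\<rfloor> + 1" by linarith+
  have "real_of_int \<lfloor>t/w\<rfloor> * w \<le> t/w * w" using 1 w0 by (intro mult_right_mono) auto
  moreover have "t/w * w \<le> (real_of_int \<lfloor>t/w\<rfloor> + 1) * w" using 1 w0 by (intro mult_right_mono) auto
  ultimately show ?thesis using w0 by simp
qed

lemma graph_box_count:
  fixes h :: "real \<Rightarrow> real"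
  assumes sig: "0 < \<sigma>" "\<sigma> \<le> 1" and K: "K \<ge> 0"
    and hol: "\<And>x y. x \<in> {0..1} \<Longrightarrow> y \<in> {0..1} \<Longrightarrow> \<bar>h x - h y\<bar> \<le> K * \<bar>x - y\<bar> powr \<sigma>"
    and d: "0 < \<delta>" "\<delta> \<le> 1"
  shows "\<exists>\<A>. finite \<A> \<and> graph_of {0..1} h \<subseteq> \<Union>\<A> \<and>
     (\<forall>A\<in>\<A>. bounded A \<and> diameter A \<le> \<delta>) \<and> real (card \<A>) \<le> 4*(K+1)*(\<delta>/2) powr (\<sigma>-2)"
proof -
  define w where "w = \<delta>/2"
  have w0: "0 < w" and w1: "w \<le> 1" using d by (auto simp: w_def)
  define bx where "bx = (\<lambda>(j::int,l::int). {real_of_int j * w..real_of_int (j+1) * w} \<times> {real_of_int l * w..real_of_int (l+1) * w})"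
  define J where "J = (\<lambda>x. (\<lfloor>x/w\<rfloor>, \<lfloor>h x/w\<rfloor>)) ` {0..1::real}"
  define N where "N = \<lfloor>1/w\<rfloor>"
  define lo where "lo = (\<lambda>j::int. \<lfloor>(h (j*w) - K*w powr \<sigma>)/w\<rfloor>)"
  define hi where "hi = (\<lambda>j::int. \<lfloor>(h (j*w) + K*w powr \<sigma>)/w\<rfloor>)"
  define S where "S = Sigma {0..N} (\<lambda>j. {lo j..hi j})"
  have JS: "J \<subseteq> S"
  proof
    fix p assume "p \<in> J"
    then obtain x where x: "x \<in> {0..1}" and p: "p = (\<lfloor>x/w\<rfloor>, \<lfloor>h x/w\<rfloor>)" by (auto simp: J_def)
    define j where "j = \<lfloor>x/w\<rfloor>"
    have j0: "0 \<le> j" using x w0 by (auto simp: j_def)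
    have jN: "j \<le> N" unfolding j_def N_def using x w0 by (intro floor_mono divide_right_mono) auto
    have "real_of_int j \<le> x/w" "x/w < real_of_int j + 1" unfolding j_def by linarith+
    then have jw: "real_of_int j * w \<le> x" "x < real_of_int j * w + w" using w0 by (auto simp: field_simps)
    have jw0: "real_of_int j * w \<in> {0..1}" using jw x j0 w0 by auto
    have "\<bar>h x - h (j*w)\<bar> \<le> K * \<bar>x - j*w\<bar> powr \<sigma>" using hol x jw0 by blast
    also have "\<dots> \<le> K * w powr \<sigma>" using jw sig K by (intro mult_left_mono powr_mono2) auto
    finally have hb: "h (j*w) - K*w powr \<sigma> \<le> h x" "h x \<le> h (j*w) + K*w powr \<sigma>" by auto
    have "lo j \<le> \<lfloor>h x/w\<rfloor>" "\<lfloor>h x/w\<rfloor> \<le> hi j" unfolding lo_def hi_def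
      using hb w0 by (intro floor_mono divide_right_mono; simp)+
    then show "p \<in> S" using j0 jN unfolding S_def p j_def[symmetric] by auto
  qed
  have finS: "finite S" unfolding S_def by auto
  have finJ: "finite J" using JS finS finite_subset by blast
  have cov: "graph_of {0..1} h \<subseteq> \<Union>(bx ` J)"
  proof
    fix p assume "p \<in> graph_of {0..1} h"
    then obtain x where x: "x \<in> {0..1}" and p: "p = (x, h x)" by (auto simp: graph_of_def)
    have a: "real_of_int \<lfloor>x/w\<rfloor> * w \<le> x \<and> x \<le> real_of_int (\<lfloor>x/w\<rfloor>+1) * w"
      using floor_mult_bounds[OF w0] by blast
    have b: "real_of_int \<lfloor>h x/w\<rfloor> * w \<le> h x \<and> h x \<le> real_of_int (\<lfloor>h x/w\<rfloor>+1) * w"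
      using floor_mult_bounds[OF w0] by blast
    have "p \<in> bx (\<lfloor>x/w\<rfloor>, \<lfloor>h x/w\<rfloor>)" using a b unfolding bx_def p by auto
    moreover have "(\<lfloor>x/w\<rfloor>, \<lfloor>h x/w\<rfloor>) \<in> J" using x unfolding J_def by auto
    ultimately show "p \<in> \<Union>(bx ` J)" by blast
  qed
  have bxp: "bounded (bx q) \<and> diameter (bx q) \<le> \<delta>" for q
  proof -
    obtain j l where q: "q = (j,l)" by (cases q)
    have "bounded (bx q)" unfolding bx_def q by (auto intro: bounded_Times)
    moreover have "diameter (bx q) \<le> \<delta>"
    proof (rule diameter_le)
      show "bx q \<noteq> {} \<or> 0 \<le> \<delta>" using d by auto
      fix u v assume "u \<in> bx q" "v \<in> bx q"
      then have "\<bar>fst u - fst v\<bar> \<le> w" "\<bar>snd u - snd v\<bar> \<le> w"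
        unfolding bx_def q by (auto simp: algebra_simps abs_le_iff)
      moreover have "norm (u - v) \<le> \<bar>fst u - fst v\<bar> + \<bar>snd u - snd v\<bar>"
        using sqrt_sum_squares_le_sum_abs[of "fst u - fst v" "snd u - snd v"]
        by (simp add: norm_prod_def)
      ultimately show "norm (u - v) \<le> \<delta>" unfolding w_def by auto
    qed
    ultimately show ?thesis ..
  qed
  have cardS: "real (card S) \<le> (1/w + 1) * (2*K*(w powr \<sigma> / w) + 2)"
  proof -
    have N0: "0 \<le> N" unfolding N_def using w0 by auto
    have NN: "real_of_int N \<le> 1/w" unfolding N_def by linarith
    have each: "real (nat (hi j - lo j + 1)) \<le> 2*K*(w powr \<sigma> / w) + 2" for j
    proof -
      have "real_of_int (hi j) - real_of_int (lo j) \<le> (h (j*w) + K*w powr \<sigma>)/w - (h (j*w) - K*w powr \<sigma>)/w + 1"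
        unfolding hi_def lo_def by linarith
      also have "\<dots> = 2*K*(w powr \<sigma> / w) + 1" using w0 by (simp add: field_simps)
      finally have c: "real_of_int (hi j) - real_of_int (lo j) \<le> 2*K*(w powr \<sigma> / w) + 1" .
      have p: "0 \<le> 2*K*(w powr \<sigma> / w)" using K w0 by simp
      show ?thesis
      proof (cases "0 \<le> hi j - lo j + 1")
        case True then show ?thesis using c by simp
      next
        case False then have "nat (hi j - lo j + 1) = 0" by simp
        then show ?thesis using p by simp
      qed
    qed
    have "card S = (\<Sum>j\<in>{0..N}. card {lo j..hi j})" unfolding S_def by (rule card_SigmaI) auto
    then have "real (card S) = (\<Sum>j\<in>{0..N}. real (nat (hi j - lo j + 1)))" by simp
    also have "\<dots> \<le> (\<Sum>j\<in>{0..N}. 2*K*(w powr \<sigma> / w) + 2)" by (rule sum_mono) (rule each)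
    also have "\<dots> = real_of_int (N + 1) * (2*K*(w powr \<sigma> / w) + 2)" using N0 by simp
    also have "\<dots> \<le> (1/w + 1) * (2*K*(w powr \<sigma> / w) + 2)"
      using NN K w0 by (intro mult_right_mono) auto
    finally show ?thesis .
  qed
  have fin: "(1/w + 1) * (2*K*(w powr \<sigma> / w) + 2) \<le> 4*(K+1)*w powr (\<sigma>-2)"
  proof -
    have e1: "w powr \<sigma> / w = w powr (\<sigma> - 1)" using w0 by (simp add: powr_diff)
    have e3: "w powr (1 - \<sigma>) \<le> 1" using w0 w1 sig by (intro powr_le1) auto
    have e4: "0 < w powr (1 - \<sigma>)" using w0 by simp
    have "w powr (\<sigma> - 1) = inverse (w powr (1 - \<sigma>))" by (simp add: powr_minus[symmetric])
    then have e2: "1 \<le> w powr (\<sigma> - 1)" using e3 e4 by (simp add: one_le_inverse)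
    have "1/w + 1 \<le> 2/w" using w0 w1 by (simp add: field_simps)
    moreover have "2*K*(w powr \<sigma> / w) + 2 \<le> (2*K+2) * w powr (\<sigma>-1)" using e1 e2 K by (simp add: algebra_simps)
    ultimately have "(1/w + 1) * (2*K*(w powr \<sigma> / w) + 2) \<le> (2/w) * ((2*K+2) * w powr (\<sigma>-1))"
      using w0 K e1 by (intro mult_mono) auto
    also have "\<dots> = 4*(K+1)*(w powr (\<sigma>-1) / w)" by (simp add: field_simps)
    also have "w powr (\<sigma>-1) / w = w powr (\<sigma>-2)" using w0 powr_diff[of w "\<sigma>-1" 1] by simp
    finally show ?thesis by simp
  qed
  show ?thesis
  proof (intro exI[of _ "bx ` J"] conjI ballI)
    show "finite (bx ` J)" using finJ by simp
    show "graph_of {0..1} h \<subseteq> \<Union>(bx ` J)" by (rule cov)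
  next
    fix A assume "A \<in> bx ` J" then show "bounded A" "diameter A \<le> \<delta>" using bxp by auto
  next
    have "real (card (bx ` J)) \<le> real (card J)" by (simp add: card_image_le finJ)
    also have "\<dots> \<le> real (card S)" using card_mono[OF finS JS] by simp
    finally show "real (card (bx ` J)) \<le> 4*(K+1)*(\<delta>/2) powr (\<sigma>-2)" using cardS fin by (simp add: w_def)
  qed
qed

lemma content_antimono:
  assumes "\<delta>' \<le> \<delta>"
  shows "hausdorff_content s \<delta> E \<le> hausdorff_content s \<delta>' E"
  unfolding hausdorff_content_def
  by (rule INF_superset_mono) (use assms in \<open>auto intro: order_trans\<close>)

lemma content_finite_cover:
  fixes E :: "'a::metric_space set"
  assumes cov: "E \<subseteq> (\<Union>j<n. C j)" and Cp: "\<forall>j<n. bounded (C j) \<and> diameter (C j) \<le> \<delta>"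
    and s: "0 < s" and d: "0 \<le> \<delta>"
  shows "hausdorff_content s \<delta> E \<le> ennreal (real n * \<delta> powr s)"
proof -
  define C' where "C' = (\<lambda>j. if j < n then C j else {})"
  have mem: "C' \<in> {C :: nat \<Rightarrow> 'a set. E \<subseteq> (\<Union>j. C j) \<and> (\<forall>j. bounded (C j) \<and> diameter (C j) \<le> \<delta>)}"
    using cov Cp d by (auto simp: C'_def)
  have "hausdorff_content s \<delta> E \<le> (\<Sum>j. ennreal (diameter (C' j) powr s))"
    unfolding hausdorff_content_def by (rule INF_lower[OF mem])
  also have "\<dots> = (\<Sum>j<n. ennreal (diameter (C' j) powr s))"
    by (rule suminf_finite) (auto simp: C'_def)
  also have "\<dots> = ennreal (\<Sum>j<n. diameter (C' j) powr s)" by simp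
  also have "\<dots> \<le> ennreal (\<Sum>j<n. \<delta> powr s)"
  proof (intro ennreal_leI sum_mono)
    fix j assume "j \<in> {..<n}"
    then have "diameter (C' j) \<le> \<delta>" "0 \<le> diameter (C' j)" using Cp
      by (auto simp: C'_def intro!: diameter_ge_0)
    then show "diameter (C' j) powr s \<le> \<delta> powr s" using s by (intro powr_mono2) auto
  qed
  finally show ?thesis by simp
qed

locale holder_graph =
  fixes h :: "real \<Rightarrow> real" and \<sigma> K :: real
  assumes sig: "0 < \<sigma>" "\<sigma> \<le> 1" and K: "K \<ge> 0"
    and hol: "\<And>x y. x \<in> {0..1} \<Longrightarrow> y \<in> {0..1} \<Longrightarrow> \<bar>h x - h y\<bar> \<le> K * \<bar>x - y\<bar> powr \<sigma>"
begin

abbreviation "G \<equiv> graph_of {0..1} h"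

lemma bc:
  assumes d: "0 < \<delta>" "\<delta> \<le> 1"
  shows "real (box_count \<delta> G) \<le> 4*(K+1)*(\<delta>/2) powr (\<sigma>-2)"
    "1 \<le> box_count \<delta> G"
    "\<exists>C :: nat \<Rightarrow> (real\<times>real) set. G \<subseteq> (\<Union>j<box_count \<delta> G. C j) \<and>
        (\<forall>j<box_count \<delta> G. bounded (C j) \<and> diameter (C j) \<le> \<delta>)"
proof -
  obtain \<A> where A: "finite \<A>" "G \<subseteq> \<Union>\<A>" "\<forall>A\<in>\<A>. bounded A \<and> diameter A \<le> \<delta>"
     "real (card \<A>) \<le> 4*(K+1)*(\<delta>/2) powr (\<sigma>-2)"
    using graph_box_count[OF sig K hol d] by blast
  have "box_count \<delta> G \<le> card \<A>" using box_count_le_card(1)[of \<A> G \<delta>] A by blast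
  then show "real (box_count \<delta> G) \<le> 4*(K+1)*(\<delta>/2) powr (\<sigma>-2)" using A(4) by linarith
  show ex: "\<exists>C :: nat \<Rightarrow> (real\<times>real) set. G \<subseteq> (\<Union>j<box_count \<delta> G. C j) \<and>
        (\<forall>j<box_count \<delta> G. bounded (C j) \<and> diameter (C j) \<le> \<delta>)"
    using box_count_le_card(2)[of \<A> G \<delta>] A by blast
  have "(0, h 0) \<in> G" by (auto simp: graph_of_def)
  then show "1 \<le> box_count \<delta> G" using ex by (cases "box_count \<delta> G") auto
qed

definition ratio :: "real \<Rightarrow> real" where
  "ratio \<delta> = ln (real (box_count \<delta> G)) / - ln \<delta>"

lemma ev01: "eventually (\<lambda>\<delta>. 0 < \<delta> \<and> \<delta> < 1) (at_right (0::real))"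
  using eventually_at_right_real[of 0 1] by (auto elim: eventually_mono)

lemma ratio_nonneg: "eventually (\<lambda>\<delta>. 0 \<le> ereal (ratio \<delta>)) (at_right 0)"
  using ev01
proof (rule eventually_mono)
  fix \<delta> :: real assume d: "0 < \<delta> \<and> \<delta> < 1"
  then have "1 \<le> box_count \<delta> G" using bc(2)[of \<delta>] by auto
  then have "0 \<le> ln (real (box_count \<delta> G))" by simp
  moreover have "0 < - ln \<delta>" using d by simp
  ultimately show "0 \<le> ereal (ratio \<delta>)" unfolding ratio_def by (simp add: divide_nonneg_neg)
qed

lemma upper: "upper_box_dim G \<le> ereal (2 - \<sigma>)"
proof -
  define c where "c = 4*(K+1)*(1/2) powr (\<sigma>-2)"
  have c0: "0 < c" using K by (simp add: c_def)
  have ev: "eventually (\<lambda>\<delta>. ereal (ratio \<delta>) \<le> ereal (ln c / - ln \<delta> + (2 - \<sigma>))) (at_right 0)"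
    using ev01
  proof (rule eventually_mono)
    fix \<delta> :: real assume d: "0 < \<delta> \<and> \<delta> < 1"
    have N1: "1 \<le> box_count \<delta> G" using bc(2)[of \<delta>] d by auto
    have "real (box_count \<delta> G) \<le> 4*(K+1)*(\<delta>/2) powr (\<sigma>-2)" using bc(1)[of \<delta>] d by auto
    also have "(\<delta>/2) powr (\<sigma>-2) = (1/2) powr (\<sigma>-2) * \<delta> powr (\<sigma>-2)"
      using d powr_mult[of "1/2" \<delta> "\<sigma>-2"] by simp
    finally have "real (box_count \<delta> G) \<le> c * \<delta> powr (\<sigma>-2)" by (simp add: c_def)
    then have "ln (real (box_count \<delta> G)) \<le> ln (c * \<delta> powr (\<sigma>-2))"
      using N1 by (subst ln_le_cancel_iff) auto
    also have "\<dots> = ln c + (\<sigma>-2) * ln \<delta>" using c0 d by (simp add: ln_mult ln_powr)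
    finally have "ln (real (box_count \<delta> G)) / - ln \<delta> \<le> (ln c + (\<sigma>-2) * ln \<delta>) / - ln \<delta>"
      using d by (intro divide_right_mono) auto
    also have "\<dots> = ln c / - ln \<delta> + (2 - \<sigma>)" using d by (simp add: field_simps)
    finally show "ereal (ratio \<delta>) \<le> ereal (ln c / - ln \<delta> + (2 - \<sigma>))" by (simp add: ratio_def)
  qed
  have lim: "((\<lambda>\<delta>. ln c / - ln \<delta> + (2 - \<sigma>)) \<longlongrightarrow> 0 + (2 - \<sigma>)) (at_right (0::real))"
  proof (intro tendsto_add tendsto_const)
    have "filterlim (\<lambda>\<delta>. - ln \<delta>) at_top (at_right (0::real))"
      using ln_at_0 by (simp add: filterlim_uminus_at_bot)
    then show "((\<lambda>\<delta>. ln c / - ln \<delta>) \<longlongrightarrow> 0) (at_right (0::real))"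
      by (intro tendsto_divide_0[OF tendsto_const] filterlim_at_top_imp_at_infinity)
  qed
  have "upper_box_dim G = Limsup (at_right 0) (\<lambda>\<delta>. ereal (ratio \<delta>))"
    unfolding upper_box_dim_def ratio_def by simp
  also have "\<dots> \<le> Limsup (at_right 0) (\<lambda>\<delta>. ereal (ln c / - ln \<delta> + (2 - \<sigma>)))"
    by (rule Limsup_mono[OF ev])
  also have "\<dots> = ereal (2 - \<sigma>)"
    by (rule lim_imp_Limsup) (use lim in auto)
  finally show ?thesis .
qed

lemma lower_le_upper: "lower_box_dim G \<le> upper_box_dim G"
  unfolding lower_box_dim_def upper_box_dim_def by (rule Liminf_le_Limsup) simp

lemma lower_nonneg: "0 \<le> lower_box_dim G"
  unfolding lower_box_dim_def using ratio_nonneg unfolding ratio_def by (rule Liminf_bounded)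

end

context holder_graph begin

lemma haus_le_lower: "hausdorff_dim G \<le> lower_box_dim G"
proof (rule dense_ge)
  fix y assume y: "lower_box_dim G < y"
  show "hausdorff_dim G \<le> y"
  proof (cases y)
    case PInf then show ?thesis by simp
  next
    case MInf then show ?thesis using y by simp
  next
    case (real r)
    obtain l where l: "lower_box_dim G = ereal l"
      using y lower_nonneg real by (cases "lower_box_dim G") auto
    have l0: "0 \<le> l" and lr: "l < r" using lower_nonneg y l real by auto
    define t where "t = (l + r) / 2"
    have lt: "l < t" and tr: "t < r" using lr by (auto simp: t_def)
    have freq: "frequently (\<lambda>\<delta>. ereal (ratio \<delta>) < ereal t) (at_right 0)"
    proof (rule ccontr)
      assume "\<not> ?thesis"
      then have "eventually (\<lambda>\<delta>. ereal t \<le> ereal (ratio \<delta>)) (at_right 0)"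
        by (auto simp: not_frequently not_less)
      then have "ereal t \<le> lower_box_dim G"
        unfolding lower_box_dim_def ratio_def by (rule Liminf_bounded)
      then show False using l lt by simp
    qed
    have r0: "0 < r" using l0 lr by simp
    have H0: "hausdorff_measure r G = 0"
    proof -
      have "hausdorff_content r \<delta> G = 0" if d: "0 < \<delta>" for \<delta>
      proof -
        have "hausdorff_content r \<delta> G \<le> 0 + ennreal \<epsilon>" if e: "0 < \<epsilon>" for \<epsilon>
        proof -
          define b where "b = min (min \<delta> 1) (\<epsilon> powr (1/(r-t)))"
          have b0: "0 < b" using d e by (simp add: b_def)
          have "frequently (\<lambda>\<delta>'. ereal (ratio \<delta>') < ereal t \<and> \<delta>' \<in> {0<..<b}) (at_right 0)"
            using freq eventually_at_right_real[OF b0] by (rule frequently_eventually_frequently)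
          then obtain \<delta>' where rt: "ratio \<delta>' < t" and d': "0 < \<delta>'" "\<delta>' < b"
            by (auto dest: frequently_ex)
          have d1: "\<delta>' < 1" "\<delta>' < \<delta>" "\<delta>' < \<epsilon> powr (1/(r-t))" using d' by (auto simp: b_def)
          define N where "N = box_count \<delta>' G"
          have N1: "1 \<le> N" using bc(2)[of \<delta>'] d' d1 by (auto simp: N_def)
          obtain C where C: "G \<subseteq> (\<Union>j<N. C j)" "\<forall>j<N. bounded (C j) \<and> diameter (C j) \<le> \<delta>'"
            using bc(3)[of \<delta>'] d' d1 unfolding N_def by auto
          have "ln (real N) / - ln \<delta>' < t" using rt by (simp add: ratio_def N_def)
          moreover have p: "0 < - ln \<delta>'" using d' d1 by simp
          ultimately have "ln (real N) < t * - ln \<delta>'"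
            using pos_divide_less_eq[OF p, of "ln (real N)" t] by blast
          also have "\<dots> = ln (\<delta>' powr (-t))" using d' by (simp add: ln_powr)
          finally have Nlt: "real N < \<delta>' powr (-t)" using N1 d' by (subst (asm) ln_less_cancel_iff) auto
          have "hausdorff_content r \<delta> G \<le> hausdorff_content r \<delta>' G"
            using d1 by (intro content_antimono) auto
          also have "\<dots> \<le> ennreal (real N * \<delta>' powr r)"
            using content_finite_cover[OF C r0] d' by auto
          also have "\<dots> \<le> ennreal \<epsilon>"
          proof (rule ennreal_leI)
            have "real N * \<delta>' powr r \<le> \<delta>' powr (-t) * \<delta>' powr r"
              using Nlt by (intro mult_right_mono) auto
            also have "\<dots> = \<delta>' powr (r - t)" using d' by (simp add: powr_add[symmetric])
            also have "\<dots> \<le> (\<epsilon> powr (1/(r-t))) powr (r - t)"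
              using d' d1 tr by (intro powr_mono2) auto
            also have "\<dots> = \<epsilon>" using tr e by (simp add: powr_powr)
            finally show "real N * \<delta>' powr r \<le> \<epsilon>" .
          qed
          finally show ?thesis by simp
        qed
        then have "hausdorff_content r \<delta> G \<le> 0" by (rule ennreal_le_epsilon) (use that in auto)
        then show ?thesis by simp
      qed
      then show ?thesis unfolding hausdorff_measure_def by (simp add: SUP_constant)
    qed
    have "hausdorff_dim G \<le> ereal r"
      unfolding hausdorff_dim_def using H0 r0 by (intro Inf_lower) auto
    then show ?thesis using real by simp
  qed
qed

end

lemma sum_diam_ge:
  fixes h :: "real \<Rightarrow> real" and C :: "nat \<Rightarrow> (real \<times> real) set"
  assumes cov: "graph_of {0..1} h \<subseteq> (\<Union>j. C j)" and Cb: "\<forall>j. bounded (C j) \<and> diameter (C j) \<le> 1"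
    and s: "0 < s" "s \<le> 1"
  shows "ennreal (1/2) \<le> (\<Sum>j. ennreal (diameter (C j) powr s))"
proof -
  define d where "d = (\<lambda>j. diameter (C j))"
  define p where "p = (\<lambda>j. SOME q. q \<in> C j)"
  define I where "I = (\<lambda>j. if C j = {} then {} else {fst (p j) - d j .. fst (p j) + d j})"
  have d0: "0 \<le> d j" for j unfolding d_def by (rule diameter_ge_0) (use Cb in auto)
  have sub: "{0..1} \<subseteq> (\<Union>j. I j)"
  proof
    fix x :: real assume x: "x \<in> {0..1}"
    then have "(x, h x) \<in> graph_of {0..1} h" by (auto simp: graph_of_def)
    then obtain j where j: "(x, h x) \<in> C j" using cov by blast
    then have ne: "C j \<noteq> {}" by auto
    have pj: "p j \<in> C j" unfolding p_def using j by (rule someI)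
    have "dist x (fst (p j)) \<le> dist (x, h x) (p j)" using dist_fst_le[of "(x, h x)" "p j"] by simp
    also have "\<dots> \<le> d j" unfolding d_def using Cb j pj by (intro diameter_bounded_bound) auto
    finally have "x \<in> I j" using ne by (auto simp: I_def dist_real_def abs_le_iff)
    then show "x \<in> (\<Union>j. I j)" by blast
  qed
  have meas: "\<And>j. I j \<in> sets lborel" by (simp add: I_def)
  have eI: "emeasure lborel (I j) \<le> 2 * ennreal (diameter (C j) powr s)" for j
  proof (cases "C j = {}")
    case True then show ?thesis by (simp add: I_def)
  next
    case False
    have "d j \<le> d j powr s"
    proof (cases "d j = 0")
      case True then show ?thesis by simp
    next
      case False
      then have "d j powr 1 \<le> d j powr s" using d0 Cb s by (intro powr_mono') (auto simp: d_def)
      then show ?thesis using False d0 by simp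
    qed
    then have "emeasure lborel (I j) = ennreal (2 * d j)" using False d0 by (simp add: I_def)
    also have "\<dots> \<le> ennreal (2 * d j powr s)" using \<open>d j \<le> d j powr s\<close> by (intro ennreal_leI) auto
    also have "\<dots> = 2 * ennreal (diameter (C j) powr s)" by (simp add: ennreal_mult d_def)
    finally show ?thesis .
  qed
  have "1 = emeasure lborel {0..1::real}" by simp
  also have "\<dots> \<le> emeasure lborel (\<Union>j. I j)" using sub meas by (intro emeasure_mono) auto
  also have "\<dots> \<le> (\<Sum>j. emeasure lborel (I j))" using meas by (intro emeasure_subadditive_countably) auto
  also have "\<dots> \<le> (\<Sum>j. 2 * ennreal (diameter (C j) powr s))" using eI by (intro suminf_le) auto
  also have "\<dots> = 2 * (\<Sum>j. ennreal (diameter (C j) powr s))" by simp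
  finally have 1: "1 \<le> 2 * (\<Sum>j. ennreal (diameter (C j) powr s))" .
  have "ennreal (1/2) = ennreal (1/2) * 1" by simp
  also have "\<dots> \<le> ennreal (1/2) * (2 * (\<Sum>j. ennreal (diameter (C j) powr s)))"
    using 1 by (intro mult_left_mono) auto
  also have "\<dots> = (ennreal (1/2) * 2) * (\<Sum>j. ennreal (diameter (C j) powr s))" by (simp add: mult.assoc)
  also have "ennreal (1/2) * 2 = 1"
  proof -
    have "ennreal (1/2) * 2 = ennreal (1/2) * ennreal 2" by simp
    also have "\<dots> = ennreal (1/2 * 2)" by (rule ennreal_mult[symmetric]) auto
    finally show ?thesis by simp
  qed
  finally show ?thesis by simp
qed

lemma one_le_haus:
  fixes h :: "real \<Rightarrow> real"
  shows "1 \<le> hausdorff_dim (graph_of {0..1} h)"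
  unfolding hausdorff_dim_def
proof (rule Inf_greatest, clarify)
  fix s :: real assume s: "0 < s" and H: "hausdorff_measure s (graph_of {0..1} h) = 0"
  show "1 \<le> ereal s"
  proof (rule ccontr)
    assume "\<not> 1 \<le> ereal s"
    then have s1: "s \<le> 1" by simp
    have "ennreal (1/2) \<le> hausdorff_content s 1 (graph_of {0..1} h)"
      unfolding hausdorff_content_def using sum_diam_ge[OF _ _ s s1] by (intro INF_greatest) auto
    also have "\<dots> \<le> hausdorff_measure s (graph_of {0..1} h)"
      unfolding hausdorff_measure_def by (intro SUP_upper) auto
    finally show False using H by simp
  qed
qed

lemma part_mono:
  assumes part: "valid_partition M xp" and ij: "i \<le> j" "j \<le> M k"
  shows "xp k i \<le> xp k j"
  using ij
proof (induction j)
  case 0 then show ?case by simp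
next
  case (Suc j)
  show ?case
  proof (cases "i = Suc j")
    case True then show ?thesis by simp
  next
    case False
    then have "xp k i \<le> xp k j" using Suc by auto
    also have "xp k j < xp k (Suc j)" using part Suc.prems unfolding valid_partition_def
      by (metis diff_Suc_1 le_add1 plus_1_eq_Suc)
    finally show ?thesis by simp
  qed
qed

lemma part_range:
  assumes part: "valid_partition M xp" and i: "i \<le> M k"
  shows "0 \<le> xp k i" "xp k i \<le> 1"
  using part_mono[OF part, of 0 i k] part_mono[OF part, of i "M k" k] i part
  by (auto simp: valid_partition_def)

lemma aff_a_abs:
  assumes part: "valid_partition M xp" and i: "1 \<le> i" "i \<le> M k"
  shows "\<bar>aff_a xp k i\<bar> = xp k i - xp k (i - 1)" "0 < xp k i - xp k (i - 1)"
proof -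
  have "xp k (i - 1) < xp k i" using part i by (auto simp: valid_partition_def)
  then show "\<bar>aff_a xp k i\<bar> = xp k i - xp k (i - 1)" "0 < xp k i - xp k (i - 1)"
    by (auto simp: aff_a_def)
qed

lemma a_min_props:
  fixes M :: "'q::finite \<Rightarrow> nat"
  assumes part: "valid_partition M xp"
  shows "0 < a_min M xp" "\<And>k i. 1 \<le> i \<Longrightarrow> i \<le> M k \<Longrightarrow> a_min M xp \<le> \<bar>aff_a xp k i\<bar>"
    "a_min M xp \<le> 1"
proof -
  define S where "S = {\<bar>aff_a xp k i\<bar> | k i. 1 \<le> i \<and> i \<le> M k}"
  have "S \<subseteq> (\<Union>k. (\<lambda>i. \<bar>aff_a xp k i\<bar>) ` {1..M k})" unfolding S_def by fastforce
  moreover have "finite (\<Union>k. (\<lambda>i. \<bar>aff_a xp k i\<bar>) ` {1..M k})" by auto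
  ultimately have fin: "finite S" by (rule finite_subset)
  obtain k :: 'q where True by simp
  have M2: "2 \<le> M k" using part by (auto simp: valid_partition_def)
  have in1: "\<bar>aff_a xp k 1\<bar> \<in> S" unfolding S_def using M2 by force
  then have ne: "S \<noteq> {}" by auto
  show "\<And>k i. 1 \<le> i \<Longrightarrow> i \<le> M k \<Longrightarrow> a_min M xp \<le> \<bar>aff_a xp k i\<bar>"
    unfolding a_min_def S_def[symmetric] using fin by (intro Min_le) (auto simp: S_def)
  have "Min S \<in> S" using fin ne by (rule Min_in)
  then show "0 < a_min M xp" unfolding a_min_def S_def[symmetric]
    using aff_a_abs[OF part] by (auto simp: S_def)
  have "a_min M xp \<le> \<bar>aff_a xp k 1\<bar>" unfolding a_min_def S_def[symmetric] using fin in1 by (rule Min_le)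
  also have "\<dots> = xp k 1 - xp k 0" using aff_a_abs[OF part, of 1 k] M2 by simp
  also have "\<dots> \<le> 1" using part_range[OF part, of 1 k] M2 part by (auto simp: valid_partition_def)
  finally show "a_min M xp \<le> 1" .
qed

lemma holder_cont:
  fixes h :: "'a::metric_space \<Rightarrow> real"
  assumes "holder_on \<sigma> S h" "0 < \<sigma>"
  shows "continuous_on S h"
proof -
  obtain K where K: "\<forall>x\<in>S. \<forall>y\<in>S. \<bar>h x - h y\<bar> \<le> K * dist x y powr \<sigma>"
    using assms(1) unfolding holder_on_def by blast
  define K' where "K' = max K 0 + 1"
  have K'0: "0 < K'" by (simp add: K'_def)
  have K': "\<bar>h x - h y\<bar> \<le> K' * dist x y powr \<sigma>" if "x \<in> S" "y \<in> S" for x y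
  proof -
    have "K * dist x y powr \<sigma> \<le> K' * dist x y powr \<sigma>" by (intro mult_right_mono) (auto simp: K'_def)
    then show ?thesis using K that by fastforce
  qed
  show ?thesis unfolding continuous_on_iff
  proof (intro ballI allI impI)
    fix x e assume x: "x \<in> S" and e: "0 < (e::real)"
    define d where "d = (e/(2*K')) powr (1/\<sigma>)"
    have d0: "0 < d" using e K'0 by (simp add: d_def)
    have dd: "d powr \<sigma> = e/(2*K')" using e K'0 assms(2) by (simp add: d_def powr_powr)
    show "\<exists>d>0. \<forall>x'\<in>S. dist x' x < d \<longrightarrow> dist (h x') (h x) < e"
    proof (intro exI[of _ d] conjI ballI impI d0)
      fix x' assume x': "x' \<in> S" and dx: "dist x' x < d"
      have "dist x' x powr \<sigma> < d powr \<sigma>" using dx assms(2) by (intro powr_less_mono2) auto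
      then have "K' * dist x' x powr \<sigma> < K' * (e/(2*K'))" using K'0 dd by (intro mult_strict_left_mono) auto
      also have "\<dots> = e/2" using K'0 by simp
      finally show "dist (h x') (h x) < e" using K'[OF x' x] e by (simp add: dist_real_def)
    qed
  qed
qed

lemma holder_nonneg:
  assumes "holder_on \<sigma> S h"
  obtains K where "K \<ge> 0" "\<And>x y. x \<in> S \<Longrightarrow> y \<in> S \<Longrightarrow> \<bar>h x - h y\<bar> \<le> K * dist x y powr \<sigma>"
proof -
  obtain K where K: "\<forall>x\<in>S. \<forall>y\<in>S. \<bar>h x - h y\<bar> \<le> K * dist x y powr \<sigma>"
    using assms unfolding holder_on_def by blast
  show ?thesis
  proof (rule that[of "max K 0"])
    fix x y assume "x \<in> S" "y \<in> S"
    moreover have "K * dist x y powr \<sigma> \<le> max K 0 * dist x y powr \<sigma>" by (intro mult_right_mono) auto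
    ultimately show "\<bar>h x - h y\<bar> \<le> max K 0 * dist x y powr \<sigma>" using K by fastforce
  qed auto
qed

lemma limit_geom:
  fixes a b c \<beta> :: real
  assumes "\<And>n. a \<le> b + c * \<beta> ^ n" "0 \<le> \<beta>" "\<beta> < 1"
  shows "a \<le> b"
proof -
  have "(\<lambda>n. b + c * \<beta> ^ n) \<longlonglongrightarrow> b + c * 0"
    using assms by (intro tendsto_intros) auto
  then have "(\<lambda>n. b + c * \<beta> ^ n) \<longlonglongrightarrow> b" by simp
  then show ?thesis by (rule LIMSEQ_le_const) (use assms in auto)
qed

lemma one_nth: "(One :: real^'n) $ i = 1"
  by (subst cart_eq_inner_axis) (simp add: inner_sum_Basis)

lemma one_nth2: "(\<Sum>x\<in>Basis. (x::real^'n) $ i) = 1"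
  using one_nth[of i] by simp

locale fs =
  fixes M :: "'q::finite \<Rightarrow> nat" and xp :: "'q \<Rightarrow> nat \<Rightarrow> real"
    and f \<alpha> s F :: "real^'q \<Rightarrow> real" and \<sigma> :: real and k0 :: 'q
  assumes part: "valid_partition M xp"
    and sig: "0 < \<sigma>" "\<sigma> \<le> 1"
    and hf: "holder_on \<sigma> unit_cube f"
    and ha: "holder_on \<sigma> unit_cube \<alpha>"
    and hs: "holder_on \<sigma> unit_cube s"
    and small: "max (sup_norm_on unit_cube \<alpha> / a_min M xp powr \<sigma>)
                    (sup_norm_on unit_cube \<alpha> + holder_seminorm \<sigma> unit_cube \<alpha>) < 1"
    and frac: "is_alpha_fractal M xp f \<alpha> s F"
begin

definition ev :: "real \<Rightarrow> real^'q" where "ev x = (\<chi> k. if k = k0 then x else 0)"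
definition g :: "real \<Rightarrow> real" where "g x = F (ev x)"
definition pp :: "nat \<Rightarrow> real" where "pp i = xp k0 i"
definition mm :: nat where "mm = M k0"
definition phi :: "nat \<Rightarrow> real \<Rightarrow> real" where "phi i x = (x - aff_b xp k0 i) / aff_a xp k0 i"
definition A :: real where "A = a_min M xp"
definition \<beta> :: real where "\<beta> = sup_norm_on unit_cube \<alpha>"
definition lam :: real where "lam = \<beta> / A powr \<sigma>"

lemma ev_cube: "x \<in> {0..1} \<Longrightarrow> ev x \<in> unit_cube"
  by (auto simp: unit_cube_def mem_box_cart one_nth one_nth2 ev_def)

lemma dist_ev: "dist (ev x) (ev y) = \<bar>x - y\<bar>"
proof -
  have "ev x - ev y = ev (x - y)" by (simp add: ev_def vec_eq_iff)
  then show ?thesis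
    by (simp add: dist_norm ev_def norm_eq_sqrt_inner inner_vec_def if_distrib cong: if_cong)
qed

lemma ev_cont: "continuous_on S ev"
proof -
  have "ev = (\<lambda>x. x *\<^sub>R (\<chi> k. if k = k0 then 1 else 0))"
    by (auto simp: ev_def vec_eq_iff fun_eq_iff)
  then show ?thesis by (simp add: continuous_intros)
qed

lemma hol_ev:
  assumes "holder_on \<sigma> unit_cube h"
  obtains K where "K \<ge> 0" "\<And>x y. x \<in> {0..1} \<Longrightarrow> y \<in> {0..1} \<Longrightarrow> \<bar>h (ev x) - h (ev y)\<bar> \<le> K * \<bar>x - y\<bar> powr \<sigma>"
proof -
  obtain K where K: "K \<ge> 0" "\<And>x y. x \<in> unit_cube \<Longrightarrow> y \<in> unit_cube \<Longrightarrow> \<bar>h x - h y\<bar> \<le> K * dist x y powr \<sigma>"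
    using holder_nonneg[OF assms] by blast
  show ?thesis
  proof (rule that[of K])
    fix x y :: real assume "x \<in> {0..1}" "y \<in> {0..1}"
    then show "\<bar>h (ev x) - h (ev y)\<bar> \<le> K * \<bar>x - y\<bar> powr \<sigma>"
      using K(2)[OF ev_cube ev_cube] dist_ev by metis
  qed (rule K(1))
qed

lemma bounded_on_cube:
  fixes h :: "real^'q \<Rightarrow> real"
  assumes "continuous_on unit_cube h"
  obtains B where "B \<ge> 0" "\<And>v. v \<in> unit_cube \<Longrightarrow> \<bar>h v\<bar> \<le> B"
proof -
  have "compact (h ` unit_cube)" unfolding unit_cube_def
    using assms unfolding unit_cube_def by (intro compact_continuous_image) auto
  then have "bounded (h ` unit_cube)" by (rule compact_imp_bounded)
  then obtain B where "B > 0" "\<And>v. v \<in> unit_cube \<Longrightarrow> norm (h v) \<le> B"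
    unfolding bounded_pos by auto
  then show ?thesis by (intro that[of B]) auto
qed

lemma F_cont: "continuous_on unit_cube F" using frac by (simp add: is_alpha_fractal_def)

lemma g_cont: "continuous_on {0..1} g"
proof -
  have "continuous_on {0..1} (F \<circ> ev)"
    using ev_cube by (intro continuous_on_compose continuous_on_subset[OF F_cont] ev_cont) auto
  then show ?thesis by (simp add: g_def o_def)
qed

lemma g_bound: obtains B where "B \<ge> 0" "\<And>x. x \<in> {0..1} \<Longrightarrow> \<bar>g x\<bar> \<le> B"
proof -
  obtain B where "B \<ge> 0" "\<And>v. v \<in> unit_cube \<Longrightarrow> \<bar>F v\<bar> \<le> B"
    using bounded_on_cube[OF F_cont] by blast
  then show ?thesis using ev_cube by (intro that[of B]) (auto simp: g_def)
qed

lemma s_bound: obtains B where "B \<ge> 0" "\<And>x. x \<in> {0..1} \<Longrightarrow> \<bar>s (ev x)\<bar> \<le> B"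
proof -
  obtain B where "B \<ge> 0" "\<And>v. v \<in> unit_cube \<Longrightarrow> \<bar>s v\<bar> \<le> B"
    using bounded_on_cube[OF holder_cont[OF hs sig(1)]] by blast
  then show ?thesis using ev_cube by (intro that[of B]) auto
qed

lemma alpha_le: "v \<in> unit_cube \<Longrightarrow> \<bar>\<alpha> v\<bar> \<le> \<beta>"
proof -
  assume v: "v \<in> unit_cube"
  obtain B where "B \<ge> 0" "\<And>v. v \<in> unit_cube \<Longrightarrow> \<bar>\<alpha> v\<bar> \<le> B"
    using bounded_on_cube[OF holder_cont[OF ha sig(1)]] by blast
  then have "bdd_above ((\<lambda>x. \<bar>\<alpha> x\<bar>) ` unit_cube)" by (auto intro!: bdd_aboveI)
  then show ?thesis unfolding \<beta>_def sup_norm_on_def using v by (intro cSUP_upper) auto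
qed

lemma A_props: "0 < A" "A \<le> 1" "\<And>i. 1 \<le> i \<Longrightarrow> i \<le> mm \<Longrightarrow> A \<le> \<bar>aff_a xp k0 i\<bar>"
  using a_min_props[OF part] by (auto simp: A_def mm_def)

lemma beta_props: "0 \<le> \<beta>" "lam < 1" "\<beta> < 1" "0 \<le> lam"
proof -
  have "(0::real^'q) \<in> unit_cube" by (simp add: unit_cube_def mem_box_cart one_nth one_nth2)
  then show b0: "0 \<le> \<beta>" using alpha_le[of 0] by linarith
  show l1: "lam < 1" using small by (simp add: lam_def \<beta>_def A_def)
  have "\<beta> = lam * A powr \<sigma>" using A_props by (simp add: lam_def)
  moreover have "A powr \<sigma> \<le> 1" using A_props sig by (intro powr_le1) auto
  moreover have "0 \<le> lam" using b0 by (simp add: lam_def)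
  ultimately have "\<beta> \<le> lam" by (metis mult_left_le)
  then show "\<beta> < 1" using l1 by simp
  show "0 \<le> lam" using b0 by (simp add: lam_def)
qed

lemma pp_range: "i \<le> mm \<Longrightarrow> 0 \<le> pp i \<and> pp i \<le> 1"
  using part_range[OF part] by (auto simp: pp_def mm_def)

lemma pp_mono: "i \<le> j \<Longrightarrow> j \<le> mm \<Longrightarrow> pp i \<le> pp j"
  using part_mono[OF part] by (auto simp: pp_def mm_def)

lemma pp_0: "pp 0 = 0" and pp_mm: "pp mm = 1" and mm2: "2 \<le> mm"
  using part by (auto simp: valid_partition_def pp_def mm_def)

lemma piece_len: "1 \<le> i \<Longrightarrow> i \<le> mm \<Longrightarrow> pp i - pp (i - 1) = \<bar>aff_a xp k0 i\<bar> \<and> A \<le> pp i - pp (i - 1)"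
  using aff_a_abs[OF part, of i k0] A_props(3)[of i] by (auto simp: pp_def mm_def)

lemma phi_props:
  assumes i: "1 \<le> i" "i \<le> mm" and x: "x \<in> {pp (i - 1)..pp i}" and y: "y \<in> {pp (i - 1)..pp i}"
  shows "phi i x \<in> {0..1}" "\<bar>phi i x - phi i y\<bar> = \<bar>x - y\<bar> / \<bar>aff_a xp k0 i\<bar>"
proof -
  have lt: "pp (i - 1) < pp i" using aff_a_abs[OF part, of i k0] i by (auto simp: pp_def mm_def)
  show "phi i x \<in> {0..1}"
  proof (cases "odd i")
    case True then show ?thesis using x lt
      by (auto simp: phi_def aff_a_def aff_b_def pp_def divide_le_eq_1 field_simps)
  next
    case False then show ?thesis using x lt
      by (auto simp: phi_def aff_a_def aff_b_def pp_def divide_le_eq_1 field_simps)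
  qed
  have "phi i x - phi i y = (x - y) / aff_a xp k0 i" by (simp add: phi_def diff_divide_distrib)
  then show "\<bar>phi i x - phi i y\<bar> = \<bar>x - y\<bar> / \<bar>aff_a xp k0 i\<bar>" by simp
qed

lemma phi_end:
  assumes i: "1 \<le> i" "i \<le> mm"
  shows "phi i (pp (i - 1)) \<in> {0,1}" "phi i (pp i) \<in> {0,1}"
proof -
  have lt: "pp (i - 1) < pp i" using aff_a_abs[OF part, of i k0] i by (auto simp: pp_def mm_def)
  show "phi i (pp (i - 1)) \<in> {0,1}" "phi i (pp i) \<in> {0,1}"
    using lt by (auto simp: phi_def aff_a_def aff_b_def pp_def)
qed

lemma selfref:
  assumes i: "1 \<le> i" "i \<le> mm" and x: "x \<in> {pp (i - 1)..pp i}"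
  shows "g x = f (ev x) + \<alpha> (ev x) * (g (phi i x) - s (ev (phi i x)))"
proof -
  define I where "I = (\<lambda>k. if k = k0 then i else 1)"
  have M2: "\<forall>k. 2 \<le> M k" using part by (simp add: valid_partition_def)
  have I: "\<forall>k. 1 \<le> I k \<and> I k \<le> M k"
  proof
    fix k show "1 \<le> I k \<and> I k \<le> M k" using i M2[rule_format, of k] by (auto simp: I_def mm_def)
  qed
  have pt: "\<forall>k. xp k (I k - 1) \<le> ev x $ k \<and> ev x $ k \<le> xp k (I k)"
  proof
    fix k show "xp k (I k - 1) \<le> ev x $ k \<and> ev x $ k \<le> xp k (I k)"
    proof (cases "k = k0")
      case True then show ?thesis using x by (simp add: I_def ev_def pp_def)
    next
      case False
      have "xp k 0 < xp k 1" "xp k 0 = 0" using part unfolding valid_partition_def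
        by (metis diff_self_eq_0 le_numeral_extra(4) one_le_numeral order_trans) (use part in \<open>auto simp: valid_partition_def\<close>)
      then show ?thesis using False by (simp add: I_def ev_def)
    qed
  qed
  have "F (ev x) = f (ev x) + \<alpha> (ev x) * (F (u_inv xp I (ev x)) - s (u_inv xp I (ev x)))"
    using frac I pt unfolding is_alpha_fractal_def by blast
  moreover have "u_inv xp I (ev x) = ev (phi i x)"
    using part by (auto simp: u_inv_def vec_eq_iff I_def ev_def phi_def aff_b_def valid_partition_def)
  ultimately show ?thesis by (simp add: g_def)
qed

lemma cover:
  assumes x: "x \<in> {0..1}"
  shows "\<exists>i. 1 \<le> i \<and> i \<le> mm \<and> x \<in> {pp (i - 1)..pp i}"
proof (cases "x = 0")
  case True then show ?thesis using mm2 pp_mono[of 0 1] by (intro exI[of _ 1]) (auto simp: pp_0)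
next
  case False
  define i where "i = (LEAST i. x \<le> pp i)"
  have ex: "x \<le> pp mm" using x pp_mm by simp
  have xi: "x \<le> pp i" unfolding i_def by (rule LeastI) (rule ex)
  have im: "i \<le> mm" unfolding i_def by (rule Least_le) (rule ex)
  have i1: "1 \<le> i" using xi False x pp_0 by (cases i) auto
  have "\<not> x \<le> pp (i - 1)" unfolding i_def using i1 by (intro not_less_Least) (auto simp: i_def)
  then show ?thesis using xi im i1 by (intro exI[of _ i]) auto
qed

end

locale fs2 = fs +
  fixes Kf Ka Ks Bg Bs :: real
  assumes Kf: "Kf \<ge> 0" "\<And>x y. x \<in> {0..1} \<Longrightarrow> y \<in> {0..1} \<Longrightarrow> \<bar>f (ev x) - f (ev y)\<bar> \<le> Kf * \<bar>x - y\<bar> powr \<sigma>"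
    and Ka: "Ka \<ge> 0" "\<And>x y. x \<in> {0..1} \<Longrightarrow> y \<in> {0..1} \<Longrightarrow> \<bar>\<alpha> (ev x) - \<alpha> (ev y)\<bar> \<le> Ka * \<bar>x - y\<bar> powr \<sigma>"
    and Ks: "Ks \<ge> 0" "\<And>x y. x \<in> {0..1} \<Longrightarrow> y \<in> {0..1} \<Longrightarrow> \<bar>s (ev x) - s (ev y)\<bar> \<le> Ks * \<bar>x - y\<bar> powr \<sigma>"
    and Bg: "Bg \<ge> 0" "\<And>x. x \<in> {0..1} \<Longrightarrow> \<bar>g x\<bar> \<le> Bg"
    and Bs: "Bs \<ge> 0" "\<And>x. x \<in> {0..1} \<Longrightarrow> \<bar>s (ev x)\<bar> \<le> Bs"
begin

definition CC :: real where "CC = Kf + Ka * (Bg + Bs) + \<beta> * Ks / A powr \<sigma>"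

lemma CC0: "0 \<le> CC"
  using Kf Ka Ks Bg Bs beta_props A_props by (simp add: CC_def)

lemma piece_in: "1 \<le> i \<Longrightarrow> i \<le> mm \<Longrightarrow> x \<in> {pp (i - 1)..pp i} \<Longrightarrow> x \<in> {0..1}"
proof -
  assume a: "1 \<le> i" "i \<le> mm" "x \<in> {pp (i - 1)..pp i}"
  have "0 \<le> pp (i - 1)" using pp_range[of "i - 1"] a by auto
  moreover have "pp i \<le> 1" using pp_range[of i] a by auto
  ultimately show ?thesis using a by auto
qed

lemma phi_pow:
  assumes i: "1 \<le> i" "i \<le> mm" and x: "x \<in> {pp (i - 1)..pp i}" and y: "y \<in> {pp (i - 1)..pp i}"
  shows "\<bar>phi i x - phi i y\<bar> powr \<sigma> \<le> \<bar>x - y\<bar> powr \<sigma> / A powr \<sigma>"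
proof -
  have a: "A \<le> \<bar>aff_a xp k0 i\<bar>" using A_props i by auto
  have "\<bar>phi i x - phi i y\<bar> = \<bar>x - y\<bar> / \<bar>aff_a xp k0 i\<bar>" using phi_props[OF i x y] by simp
  also have "\<dots> \<le> \<bar>x - y\<bar> / A" using a A_props by (intro divide_left_mono) auto
  finally have "\<bar>phi i x - phi i y\<bar> powr \<sigma> \<le> (\<bar>x - y\<bar> / A) powr \<sigma>"
    using sig by (intro powr_mono2) auto
  also have "\<dots> = \<bar>x - y\<bar> powr \<sigma> / A powr \<sigma>" using A_props by (simp add: powr_divide)
  finally show ?thesis .
qed

lemma core:
  assumes i: "1 \<le> i" "i \<le> mm" and x: "x \<in> {pp (i - 1)..pp i}" and y: "y \<in> {pp (i - 1)..pp i}"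
  shows "\<bar>g x - g y\<bar> \<le> CC * \<bar>x - y\<bar> powr \<sigma> + \<beta> * \<bar>g (phi i x) - g (phi i y)\<bar>"
proof -
  define u where "u = phi i x"
  define v where "v = phi i y"
  define d where "d = \<bar>x - y\<bar> powr \<sigma>"
  have x01: "x \<in> {0..1}" and y01: "y \<in> {0..1}" using piece_in i x y by auto
  have u01: "u \<in> {0..1}" and v01: "v \<in> {0..1}" using phi_props[OF i x y] phi_props[OF i y x] by (auto simp: u_def v_def)
  have eq: "g x - g y = (f (ev x) - f (ev y)) + (\<alpha> (ev x) - \<alpha> (ev y)) * (g u - s (ev u))
      + \<alpha> (ev y) * ((g u - g v) - (s (ev u) - s (ev v)))"
    using selfref[OF i x] selfref[OF i y] by (simp add: u_def v_def algebra_simps)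
  have t1: "\<bar>f (ev x) - f (ev y)\<bar> \<le> Kf * d" using Kf(2)[OF x01 y01] by (simp add: d_def)
  have "\<bar>(\<alpha> (ev x) - \<alpha> (ev y)) * (g u - s (ev u))\<bar> = \<bar>\<alpha> (ev x) - \<alpha> (ev y)\<bar> * \<bar>g u - s (ev u)\<bar>"
    by (simp add: abs_mult)
  also have "\<dots> \<le> (Ka * d) * (Bg + Bs)"
  proof (intro mult_mono)
    show "\<bar>\<alpha> (ev x) - \<alpha> (ev y)\<bar> \<le> Ka * d" using Ka(2)[OF x01 y01] by (simp add: d_def)
    show "\<bar>g u - s (ev u)\<bar> \<le> Bg + Bs" using Bg(2)[OF u01] Bs(2)[OF u01] by linarith
  qed (use Ka in \<open>auto simp: d_def\<close>)
  finally have t2: "\<bar>(\<alpha> (ev x) - \<alpha> (ev y)) * (g u - s (ev u))\<bar> \<le> Ka * d * (Bg + Bs)" .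
  have uv: "\<bar>u - v\<bar> powr \<sigma> \<le> d / A powr \<sigma>" using phi_pow[OF i x y] by (simp add: u_def v_def d_def)
  have "\<bar>(g u - g v) - (s (ev u) - s (ev v))\<bar> \<le> \<bar>g u - g v\<bar> + Ks * \<bar>u - v\<bar> powr \<sigma>"
    using Ks(2)[OF u01 v01] by linarith
  also have "\<dots> \<le> \<bar>g u - g v\<bar> + Ks * (d / A powr \<sigma>)" using uv Ks by (intro add_left_mono mult_left_mono) auto
  finally have w: "\<bar>(g u - g v) - (s (ev u) - s (ev v))\<bar> \<le> \<bar>g u - g v\<bar> + Ks * (d / A powr \<sigma>)" .
  have "\<bar>\<alpha> (ev y) * ((g u - g v) - (s (ev u) - s (ev v)))\<bar> = \<bar>\<alpha> (ev y)\<bar> * \<bar>(g u - g v) - (s (ev u) - s (ev v))\<bar>"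
    by (simp add: abs_mult)
  also have "\<dots> \<le> \<beta> * (\<bar>g u - g v\<bar> + Ks * (d / A powr \<sigma>))"
    using alpha_le[OF ev_cube[OF y01]] w by (intro mult_mono) auto
  finally have t3: "\<bar>\<alpha> (ev y) * ((g u - g v) - (s (ev u) - s (ev v)))\<bar> \<le> \<beta> * \<bar>g u - g v\<bar> + \<beta> * Ks / A powr \<sigma> * d"
    by (simp add: algebra_simps)
  have "\<bar>g x - g y\<bar> \<le> Kf * d + Ka * d * (Bg + Bs) + (\<beta> * \<bar>g u - g v\<bar> + \<beta> * Ks / A powr \<sigma> * d)"
  proof -
    let ?T1 = "f (ev x) - f (ev y)"
    let ?T2 = "(\<alpha> (ev x) - \<alpha> (ev y)) * (g u - s (ev u))"
    let ?T3 = "\<alpha> (ev y) * ((g u - g v) - (s (ev u) - s (ev v)))"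
    have "\<bar>?T1 + ?T2 + ?T3\<bar> \<le> \<bar>?T1\<bar> + \<bar>?T2\<bar> + \<bar>?T3\<bar>"
      using abs_triangle_ineq[of "?T1 + ?T2" ?T3] abs_triangle_ineq[of ?T1 ?T2] by linarith
    then show ?thesis unfolding eq using t1 t2 t3 by linarith
  qed
  also have "\<dots> = CC * d + \<beta> * \<bar>g u - g v\<bar>" by (simp add: CC_def algebra_simps)
  finally show ?thesis by (simp add: d_def u_def v_def)
qed

definition K1 :: real where "K1 = max (CC / (1 - lam)) (2 * Bg / A powr \<sigma>)"

lemma K1_props: "CC + lam * K1 \<le> K1" "2 * Bg / A powr \<sigma> \<le> K1" "0 \<le> K1"
proof -
  have l: "0 \<le> lam" "lam < 1" using beta_props by auto
  have "CC / (1 - lam) \<le> K1" by (simp add: K1_def)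
  then have "CC \<le> K1 * (1 - lam)" using l by (simp add: divide_le_eq)
  then show "CC + lam * K1 \<le> K1" by (simp add: algebra_simps)
  show "2 * Bg / A powr \<sigma> \<le> K1" by (simp add: K1_def)
  then show "0 \<le> K1" using Bg A_props by (smt (verit) divide_nonneg_pos powr_gt_zero)
qed

lemma far:
  assumes x: "x \<in> {0..1}" and y: "y \<in> {0..1}" and d: "A \<le> \<bar>x - y\<bar>" and K: "2 * Bg / A powr \<sigma> \<le> K"
  shows "\<bar>g x - g y\<bar> \<le> K * \<bar>x - y\<bar> powr \<sigma>"
proof -
  have "\<bar>g x - g y\<bar> \<le> 2 * Bg" using Bg(2)[OF x] Bg(2)[OF y] by linarith
  also have "\<dots> = 2 * Bg / A powr \<sigma> * A powr \<sigma>" using A_props by simp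
  also have "\<dots> \<le> K * \<bar>x - y\<bar> powr \<sigma>"
  proof -
    have "0 \<le> 2 * Bg / A powr \<sigma>" using Bg A_props by simp
    then have K0: "0 \<le> K" using K by linarith
    show ?thesis using K0 K d A_props sig Bg by (intro mult_mono powr_mono2) auto
  qed
  finally show ?thesis .
qed

lemma stage1:
  assumes x: "x \<in> {0..1}" and e: "e \<in> {0,1}"
  shows "\<bar>g x - g e\<bar> \<le> K1 * \<bar>x - e\<bar> powr \<sigma>"
proof -
  have H: "\<bar>g x - g e\<bar> \<le> K1 * \<bar>x - e\<bar> powr \<sigma> + (2 * Bg) * \<beta> ^ n" for n
    using x e
  proof (induction n arbitrary: x e)
    case 0
    then have e01: "e \<in> {0..1}" by auto
    have "\<bar>g x - g e\<bar> \<le> 2 * Bg" using Bg(2)[OF 0(1)] Bg(2)[OF e01] by linarith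
    moreover have "0 \<le> K1 * \<bar>x - e\<bar> powr \<sigma>" using K1_props by simp
    ultimately show ?case by simp
  next
    case (Suc n)
    have e01: "e \<in> {0..1}" using Suc by auto
    show ?case
    proof (cases "A \<le> \<bar>x - e\<bar>")
      case True
      have "\<bar>g x - g e\<bar> \<le> K1 * \<bar>x - e\<bar> powr \<sigma>" using far[OF Suc(2) e01 True K1_props(2)] .
      moreover have "0 \<le> 2 * Bg * \<beta> ^ Suc n" using Bg beta_props by simp
      ultimately show ?thesis by linarith
    next
      case False
      obtain i where i: "1 \<le> i" "i \<le> mm" "x \<in> {pp (i - 1)..pp i}" "e \<in> {pp (i - 1)..pp i}"
        "phi i e \<in> {0,1}"
      proof (cases "e = 0")
        case True
        have "A \<le> pp 1 - pp 0" using piece_len[of 1] mm2 by auto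
        then have "x \<in> {pp 0..pp 1}" using False True Suc(2) pp_0 by auto
        moreover have "e \<in> {pp 0..pp 1}" using True pp_0 pp_mono[of 0 1] mm2 by auto
        moreover have "phi 1 e \<in> {0,1}" using phi_end[of 1] True pp_0 mm2 by auto
        ultimately show ?thesis using mm2 by (intro that[of 1]) auto
      next
        case False': False
        then have e1: "e = 1" using Suc(3) by auto
        have "A \<le> pp mm - pp (mm - 1)" using piece_len[of mm] mm2 by auto
        then have "x \<in> {pp (mm - 1)..pp mm}" using False e1 Suc(2) pp_mm by auto
        moreover have "e \<in> {pp (mm - 1)..pp mm}" using e1 pp_mm pp_mono[of "mm - 1" mm] by auto
        moreover have "phi mm e \<in> {0,1}" using phi_end[of mm] e1 pp_mm mm2 by auto
        ultimately show ?thesis using mm2 by (intro that[of mm]) auto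
      qed
      have px: "phi i x \<in> {0..1}" using phi_props[OF i(1,2,3,4)] by simp
      have IH: "\<bar>g (phi i x) - g (phi i e)\<bar> \<le> K1 * \<bar>phi i x - phi i e\<bar> powr \<sigma> + 2 * Bg * \<beta> ^ n"
        using Suc.IH[OF px i(5)] .
      have "\<bar>g x - g e\<bar> \<le> CC * \<bar>x - e\<bar> powr \<sigma> + \<beta> * \<bar>g (phi i x) - g (phi i e)\<bar>"
        by (rule core[OF i(1-4)])
      also have "\<dots> \<le> CC * \<bar>x - e\<bar> powr \<sigma> + \<beta> * (K1 * (\<bar>x - e\<bar> powr \<sigma> / A powr \<sigma>) + 2 * Bg * \<beta> ^ n)"
        using IH phi_pow[OF i(1-4)] beta_props K1_props
        by (intro add_left_mono mult_left_mono order.trans[OF IH] add_right_mono) auto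
      also have "\<dots> = (CC + lam * K1) * \<bar>x - e\<bar> powr \<sigma> + 2 * Bg * \<beta> ^ Suc n"
        by (simp add: lam_def algebra_simps)
      also have "\<dots> \<le> K1 * \<bar>x - e\<bar> powr \<sigma> + 2 * Bg * \<beta> ^ Suc n"
        using K1_props by (intro add_right_mono mult_right_mono) auto
      finally show ?thesis .
    qed
  qed
  show ?thesis using limit_geom[OF H beta_props(1) beta_props(3)] .
qed

end

context fs2 begin

lemma half:
  assumes i: "1 \<le> i" "i \<le> mm" and x: "x \<in> {pp (i - 1)..pp i}" and z: "z \<in> {pp (i - 1), pp i}"
  shows "\<bar>g x - g z\<bar> \<le> (CC + lam * K1) * \<bar>x - z\<bar> powr \<sigma>"
proof -
  have zJ: "z \<in> {pp (i - 1)..pp i}" using z pp_mono[of "i - 1" i] i by auto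
  have pz: "phi i z \<in> {0,1}" using z phi_end[OF i] by auto
  have px: "phi i x \<in> {0..1}" using phi_props[OF i x zJ] by simp
  have "\<bar>g x - g z\<bar> \<le> CC * \<bar>x - z\<bar> powr \<sigma> + \<beta> * \<bar>g (phi i x) - g (phi i z)\<bar>"
    by (rule core[OF i x zJ])
  also have "\<dots> \<le> CC * \<bar>x - z\<bar> powr \<sigma> + \<beta> * (K1 * (\<bar>x - z\<bar> powr \<sigma> / A powr \<sigma>))"
    using stage1[OF px pz] phi_pow[OF i x zJ] beta_props K1_props
    by (intro add_left_mono mult_left_mono order.trans[OF stage1[OF px pz]]) auto
  also have "\<dots> = (CC + lam * K1) * \<bar>x - z\<bar> powr \<sigma>" by (simp add: lam_def algebra_simps)
  finally show ?thesis .
qed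

definition K2 :: real where "K2 = max (CC / (1 - lam)) (max (2 * (CC + lam * K1)) (2 * Bg / A powr \<sigma>))"

lemma K2_props: "CC + lam * K2 \<le> K2" "2 * Bg / A powr \<sigma> \<le> K2" "0 \<le> K2" "2 * (CC + lam * K1) \<le> K2"
proof -
  have l: "0 \<le> lam" "lam < 1" using beta_props by auto
  have "CC / (1 - lam) \<le> K2" by (simp add: K2_def)
  then have "CC \<le> K2 * (1 - lam)" using l by (simp add: divide_le_eq)
  then show "CC + lam * K2 \<le> K2" by (simp add: algebra_simps)
  show "2 * Bg / A powr \<sigma> \<le> K2" by (simp add: K2_def)
  show "2 * (CC + lam * K1) \<le> K2" by (simp add: K2_def)
  then show "0 \<le> K2" using CC0 l K1_props by (smt (verit) mult_nonneg_nonneg)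
qed

lemma stage2_le:
  assumes x: "x \<in> {0..1}" and y: "y \<in> {0..1}" and xy: "x \<le> y"
    and IH: "\<And>x y. x \<in> {0..1} \<Longrightarrow> y \<in> {0..1} \<Longrightarrow> \<bar>g x - g y\<bar> \<le> K2 * \<bar>x - y\<bar> powr \<sigma> + 2 * Bg * \<beta> ^ n"
  shows "\<bar>g x - g y\<bar> \<le> K2 * \<bar>x - y\<bar> powr \<sigma> + 2 * Bg * \<beta> ^ Suc n"
proof (cases "A \<le> \<bar>x - y\<bar>")
  case True
  have "\<bar>g x - g y\<bar> \<le> K2 * \<bar>x - y\<bar> powr \<sigma>" using far[OF x y True K2_props(2)] .
  moreover have "0 \<le> 2 * Bg * \<beta> ^ Suc n" using Bg beta_props by simp
  ultimately show ?thesis by linarith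
next
  case False
  obtain i where i: "1 \<le> i" "i \<le> mm" "x \<in> {pp (i - 1)..pp i}" using cover[OF x] by blast
  show ?thesis
  proof (cases "y \<le> pp i")
    case True
    then have yJ: "y \<in> {pp (i - 1)..pp i}" using i xy by auto
    have px: "phi i x \<in> {0..1}" and py: "phi i y \<in> {0..1}"
      using phi_props[OF i(1,2,3) yJ] phi_props[OF i(1,2) yJ i(3)] by auto
    have "\<bar>g x - g y\<bar> \<le> CC * \<bar>x - y\<bar> powr \<sigma> + \<beta> * \<bar>g (phi i x) - g (phi i y)\<bar>"
      by (rule core[OF i yJ])
    also have "\<dots> \<le> CC * \<bar>x - y\<bar> powr \<sigma> + \<beta> * (K2 * (\<bar>x - y\<bar> powr \<sigma> / A powr \<sigma>) + 2 * Bg * \<beta> ^ n)"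
      using phi_pow[OF i yJ] beta_props K2_props
      by (intro add_left_mono mult_left_mono order.trans[OF IH[OF px py]] add_right_mono) auto
    also have "\<dots> = (CC + lam * K2) * \<bar>x - y\<bar> powr \<sigma> + 2 * Bg * \<beta> ^ Suc n"
      by (simp add: lam_def algebra_simps)
    also have "\<dots> \<le> K2 * \<bar>x - y\<bar> powr \<sigma> + 2 * Bg * \<beta> ^ Suc n"
      using K2_props by (intro add_right_mono mult_right_mono) auto
    finally show ?thesis .
  next
    case False': False
    have im: "i < mm"
    proof (rule ccontr)
      assume "\<not> i < mm" then have "i = mm" using i by auto
      then show False using False' y pp_mm by auto
    qed
    have len: "A \<le> pp (i + 1) - pp i" using piece_len[of "i + 1"] im by auto
    have yJ: "y \<in> {pp ((i + 1) - 1)..pp (i + 1)}" using False' False xy len i(3) by auto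
    have i1: "1 \<le> i + 1" "i + 1 \<le> mm" using im by auto
    have h1: "\<bar>g x - g (pp i)\<bar> \<le> (CC + lam * K1) * \<bar>x - pp i\<bar> powr \<sigma>"
      using half[OF i(1,2,3)] by auto
    have h2: "\<bar>g y - g (pp i)\<bar> \<le> (CC + lam * K1) * \<bar>y - pp i\<bar> powr \<sigma>"
      using half[OF i1 yJ] by auto
    have c0: "0 \<le> CC + lam * K1" using CC0 beta_props K1_props by simp
    have d1: "\<bar>x - pp i\<bar> powr \<sigma> \<le> \<bar>x - y\<bar> powr \<sigma>" using i(3) False' xy sig by (intro powr_mono2) auto
    have d2: "\<bar>y - pp i\<bar> powr \<sigma> \<le> \<bar>x - y\<bar> powr \<sigma>" using i(3) False' xy sig by (intro powr_mono2) auto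
    have "\<bar>g x - g y\<bar> \<le> \<bar>g x - g (pp i)\<bar> + \<bar>g y - g (pp i)\<bar>" by linarith
    also have "\<dots> \<le> (CC + lam * K1) * \<bar>x - y\<bar> powr \<sigma> + (CC + lam * K1) * \<bar>x - y\<bar> powr \<sigma>"
      using h1 h2 mult_left_mono[OF d1 c0] mult_left_mono[OF d2 c0] by linarith
    also have "\<dots> = (2 * (CC + lam * K1)) * \<bar>x - y\<bar> powr \<sigma>" by simp
    also have "\<dots> \<le> K2 * \<bar>x - y\<bar> powr \<sigma>" using K2_props by (intro mult_right_mono) auto
    finally have "\<bar>g x - g y\<bar> \<le> K2 * \<bar>x - y\<bar> powr \<sigma>" .
    moreover have "0 \<le> 2 * Bg * \<beta> ^ Suc n" using Bg beta_props by simp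
    ultimately show ?thesis by linarith
  qed
qed

lemma stage2:
  assumes x: "x \<in> {0..1}" and y: "y \<in> {0..1}"
  shows "\<bar>g x - g y\<bar> \<le> K2 * \<bar>x - y\<bar> powr \<sigma>"
proof -
  have H: "\<forall>x\<in>{0..1}. \<forall>y\<in>{0..1}. \<bar>g x - g y\<bar> \<le> K2 * \<bar>x - y\<bar> powr \<sigma> + (2 * Bg) * \<beta> ^ n" for n
  proof (induction n)
    case 0
    show ?case
    proof (intro ballI)
      fix x y :: real assume x: "x \<in> {0..1}" and y: "y \<in> {0..1}"
      have "\<bar>g x - g y\<bar> \<le> 2 * Bg" using Bg(2)[OF x] Bg(2)[OF y] by linarith
      moreover have "0 \<le> K2 * \<bar>x - y\<bar> powr \<sigma>" using K2_props by simp
      ultimately show "\<bar>g x - g y\<bar> \<le> K2 * \<bar>x - y\<bar> powr \<sigma> + (2 * Bg) * \<beta> ^ 0" by simp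
    qed
  next
    case (Suc n)
    show ?case
    proof (intro ballI)
      fix x y :: real assume x: "x \<in> {0..1}" and y: "y \<in> {0..1}"
      have IH: "\<And>x y. x \<in> {0..1} \<Longrightarrow> y \<in> {0..1} \<Longrightarrow> \<bar>g x - g y\<bar> \<le> K2 * \<bar>x - y\<bar> powr \<sigma> + 2 * Bg * \<beta> ^ n"
        using Suc.IH by auto
      show "\<bar>g x - g y\<bar> \<le> K2 * \<bar>x - y\<bar> powr \<sigma> + (2 * Bg) * \<beta> ^ Suc n"
      proof (cases "x \<le> y")
        case True then show ?thesis using stage2_le[OF x y True IH] by simp
      next
        case False
        then have "\<bar>g y - g x\<bar> \<le> K2 * \<bar>y - x\<bar> powr \<sigma> + 2 * Bg * \<beta> ^ Suc n"
          using stage2_le[OF y x _ IH] by simp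
        then show ?thesis by (simp add: abs_minus_commute)
      qed
    qed
  qed
  have H': "\<bar>g x - g y\<bar> \<le> K2 * \<bar>x - y\<bar> powr \<sigma> + (2 * Bg) * \<beta> ^ n" for n using H x y by blast
  show ?thesis using limit_geom[OF H' beta_props(1) beta_props(3)] .
qed

end

theorem theorem4p14:
  fixes M :: "'q::finite \<Rightarrow> nat" and xp :: "'q \<Rightarrow> nat \<Rightarrow> real"
    and f \<alpha> s F :: "real^'q \<Rightarrow> real" and \<sigma> :: real and k0 :: 'q
  assumes part: "valid_partition M xp"
    and sig: "0 < \<sigma>" "\<sigma> \<le> 1"
    and hf: "holder_on \<sigma> unit_cube f"
    and ha: "holder_on \<sigma> unit_cube \<alpha>"
    and hs: "holder_on \<sigma> unit_cube s"
    and vert: "\<forall>v\<in>cube_vertices. s v = f v"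
    and small: "max (sup_norm_on unit_cube \<alpha> / a_min M xp powr \<sigma>)
                    (sup_norm_on unit_cube \<alpha> + holder_seminorm \<sigma> unit_cube \<alpha>) < 1"
    and frac: "is_alpha_fractal M xp f \<alpha> s F"
  shows "holder_on \<sigma> {0..1} (\<lambda>x. F (\<chi> k. if k = k0 then x else 0)) \<and>
    (let G = graph_of {0..1} (\<lambda>x. F (\<chi> k. if k = k0 then x else 0)) in
      1 \<le> hausdorff_dim G \<and> hausdorff_dim G \<le> lower_box_dim G \<and>
      lower_box_dim G \<le> upper_box_dim G \<and> upper_box_dim G \<le> ereal (2 - \<sigma>))"
proof -
  interpret fs M xp f \<alpha> s F \<sigma> k0
    using part sig hf ha hs small frac by unfold_locales
  obtain Kf where Kf: "Kf \<ge> 0" "\<And>x y. x \<in> {0..1} \<Longrightarrow> y \<in> {0..1} \<Longrightarrow> \<bar>f (ev x) - f (ev y)\<bar> \<le> Kf * \<bar>x - y\<bar> powr \<sigma>"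
    using hol_ev[OF hf] by blast
  obtain Ka where Ka: "Ka \<ge> 0" "\<And>x y. x \<in> {0..1} \<Longrightarrow> y \<in> {0..1} \<Longrightarrow> \<bar>\<alpha> (ev x) - \<alpha> (ev y)\<bar> \<le> Ka * \<bar>x - y\<bar> powr \<sigma>"
    using hol_ev[OF ha] by blast
  obtain Ks where Ks: "Ks \<ge> 0" "\<And>x y. x \<in> {0..1} \<Longrightarrow> y \<in> {0..1} \<Longrightarrow> \<bar>s (ev x) - s (ev y)\<bar> \<le> Ks * \<bar>x - y\<bar> powr \<sigma>"
    using hol_ev[OF hs] by blast
  obtain Bg where Bg: "Bg \<ge> 0" "\<And>x. x \<in> {0..1} \<Longrightarrow> \<bar>g x\<bar> \<le> Bg" using g_bound by blast
  obtain Bs where Bs: "Bs \<ge> 0" "\<And>x. x \<in> {0..1} \<Longrightarrow> \<bar>s (ev x)\<bar> \<le> Bs" using s_bound by blast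
  interpret fs2 M xp f \<alpha> s F \<sigma> k0 Kf Ka Ks Bg Bs
    using Kf Ka Ks Bg Bs by unfold_locales auto
  have geq: "(\<lambda>x. F (\<chi> k. if k = k0 then x else 0)) = g" by (simp add: fun_eq_iff g_def ev_def)
  have hol: "\<And>x y. x \<in> {0..1} \<Longrightarrow> y \<in> {0..1} \<Longrightarrow> \<bar>g x - g y\<bar> \<le> K2 * \<bar>x - y\<bar> powr \<sigma>"
    by (rule stage2)
  have H1: "holder_on \<sigma> {0..1} g"
    unfolding holder_on_def dist_real_def using hol by (intro exI[of _ K2]) blast
  interpret hg: holder_graph g \<sigma> K2
    using sig K2_props hol by unfold_locales auto
  show ?thesis
    unfolding geq Let_def
    using H1 one_le_haus[of g] hg.haus_le_lower hg.lower_le_upper hg.upper by blast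
qed

end
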